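(* Let $n\in\mathbb{N}$. If a finite set $X\subseteq\mathbb{N}$ is $\omega^{36n}$-large and exp-sparse, then it is $\mathrm{EM}$-$\omega^n$-large: for every colouring $P:[X]^2\to2$ there exists an $\omega^n$-large $Y\subseteq X$ such that $P$ is transitive on $[Y]^2$.
   Context: Ordinals below $\omega^\omega$ are in Cantor normal form; $\omega^j\cdot m$ = sum of $m$ copies of $\omega^j$. For $m\in\mathbb{N}$: $0[m]=0$, $(\beta+1)[m]=\beta$, $(\beta+\omega^{n})[m]=\beta+\omega^{n-1}\cdot m$ for $n\ge1$. A finite $X=\{x_0<\dots<x_{\ell-1}\}\subseteq\mathbb{N}$ is $\alpha$-large if $\alpha[x_0]\cdots[x_{\ell-1}]=0$. A set $X$ with $\min X\ge3$ is exp-sparse if $x<y$ in $X$ implies $4^x<y$. Pairs in $[Y]^2$ are ordered pairs $(x,y)$ with $x<y$; $P$ is transitive on $[Y]^2$ if both $\{(x,y):P(x,y)=0\}$ and $\{(x,y):P(x,y)=1\}$ restricted to $Y$ are transitive relations, i.e. for $x<y<z$ in $Y$, $P(x,y)=P(y,z)$ implies $P(x,z)=P(x,y)$. *)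

theory Defs
  imports Main
begin

text \<open>Ordinals below omega^omega in Cantor normal form
  omega^(e_1) + ... + omega^(e_k), e_1 >= ... >= e_k, are represented by the
  list [e_1, ..., e_k] of exponents (the empty list is 0).\<close>
type_synonym cnf = "nat list"

definition omega_pow :: "nat \<Rightarrow> cnf" where
  "omega_pow j = [j]"

text \<open>Fundamental sequence step alpha[m]:
  0[m] = 0, (beta+1)[m] = beta, (beta+omega^n)[m] = beta + omega^(n-1) * m.\<close>
definition fund :: "cnf \<Rightarrow> nat \<Rightarrow> cnf" where
  "fund \<alpha> m =
     (if \<alpha> = [] then []
      else if last \<alpha> = 0 then butlast \<alpha>
      else butlast \<alpha> @ replicate m (last \<alpha> - 1))"

definition large :: "cnf \<Rightarrow> nat set \<Rightarrow> bool" where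
  "large \<alpha> X \<longleftrightarrow> finite X \<and> foldl fund \<alpha> (sorted_list_of_set X) = []"

definition exp_sparse :: "nat set \<Rightarrow> bool" where
  "exp_sparse X \<longleftrightarrow> (\<forall>x\<in>X. 3 \<le> x) \<and> (\<forall>x\<in>X. \<forall>y\<in>X. x < y \<longrightarrow> 4 ^ x < y)"

definition transitive_on :: "(nat \<Rightarrow> nat \<Rightarrow> bool) \<Rightarrow> nat set \<Rightarrow> bool" where
  "transitive_on P Y \<longleftrightarrow>
     (\<forall>x\<in>Y. \<forall>y\<in>Y. \<forall>z\<in>Y. x < y \<and> y < z \<and> P x y = P y z \<longrightarrow> P x z = P x y)"

definition EM_large :: "cnf \<Rightarrow> nat set \<Rightarrow> bool" where
  "EM_large \<alpha> X \<longleftrightarrow>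
     (\<forall>P :: nat \<Rightarrow> nat \<Rightarrow> bool. \<exists>Y \<subseteq> X. large \<alpha> Y \<and> transitive_on P Y)"

end

theory Submission
  imports Defs
begin


definition lessset :: "nat set \<Rightarrow> nat set \<Rightarrow> bool" where
  "lessset A B \<longleftrightarrow> (\<forall>x\<in>A. \<forall>y\<in>B. x < y)"

fun Lw :: "nat \<Rightarrow> nat set \<Rightarrow> bool" where
  "Lw 0 S = (finite S \<and> S \<noteq> {})"
| "Lw (Suc g) S = (finite S \<and> S \<noteq> {} \<and> (\<exists>bs. length bs = Min S \<and> (\<forall>B\<in>set bs. Lw g B)
      \<and> sorted_wrt lessset bs \<and> \<Union>(set bs) \<subseteq> S - {Min S}))"

definition L :: "nat \<Rightarrow> nat \<Rightarrow> nat set \<Rightarrow> bool" where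
  "L g k S \<longleftrightarrow> (\<exists>bs. length bs = k \<and> (\<forall>B\<in>set bs. Lw g B) \<and> sorted_wrt lessset bs \<and> \<Union>(set bs) \<subseteq> S)"

lemma Lw_Suc': "Lw (Suc g) S \<longleftrightarrow> finite S \<and> S \<noteq> {} \<and> L g (Min S) (S - {Min S})"
  by (simp add: L_def)

declare Lw.simps(2)[simp del]

lemma L_mono: "L g k S \<Longrightarrow> S \<subseteq> T \<Longrightarrow> L g k T"
  unfolding L_def by blast

lemma L_le: "L g k S \<Longrightarrow> j \<le> k \<Longrightarrow> L g j S"
  unfolding L_def
proof (elim exE conjE)
  fix bs assume h: "length bs = k" "\<forall>B\<in>set bs. Lw g B" "sorted_wrt lessset bs" "\<Union> (set bs) \<subseteq> S" "j \<le> k"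
  show "\<exists>bs. length bs = j \<and> (\<forall>B\<in>set bs. Lw g B) \<and> sorted_wrt lessset bs \<and> \<Union> (set bs) \<subseteq> S"
    apply (rule exI[of _ "take j bs"])
    using h by (auto simp: sorted_wrt_take dest: in_set_takeD)
qed

lemma L_0[simp]: "L g 0 S"
  unfolding L_def by auto

lemma Lw_ne: assumes "Lw g S" shows "finite S \<and> S \<noteq> {}"
proof (cases g)
  case (Suc h)
  then show ?thesis using assms by (simp add: Lw_Suc')
qed (use assms in simp)

lemma Lw_mono: assumes a: "Lw g S" "S \<subseteq> T" "finite T" shows "Lw g T"
proof (cases g)
  case 0
  then show ?thesis using a by auto
next
  case (Suc h)
  have fS: "finite S" "S \<noteq> {}" using a Lw_ne by auto
  have LS: "L h (Min S) (S - {Min S})" using a Suc by (simp add: Lw_Suc')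
  have "Min S \<in> T" using Min_in[OF fS(1) fS(2)] a(2) by blast
  then have le: "Min T \<le> Min S" using a(3) by simp
  have sub: "S - {Min S} \<subseteq> T - {Min T}"
  proof
    fix x assume x: "x \<in> S - {Min S}"
    then have "x \<in> T" using a by auto
    moreover have "x \<noteq> Min T"
    proof
      assume "x = Min T"
      then have "x \<le> Min S" using le by simp
      moreover have "Min S \<le> x" using x fS by simp
      ultimately show False using x by simp
    qed
    ultimately show "x \<in> T - {Min T}" by simp
  qed
  have "L h (Min T) (T - {Min T})"
    using L_le[OF L_mono[OF LS sub] le] .
  then show ?thesis unfolding Suc Lw_Suc' using a(3) fS a(2) by blast
qed

lemma L_1: "L g (Suc k) S \<Longrightarrow> \<exists>B\<subseteq>S. Lw g B"
proof -
  assume "L g (Suc k) S"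
  then obtain bs where h: "length bs = Suc k" "\<forall>B\<in>set bs. Lw g B" "\<Union> (set bs) \<subseteq> S"
    unfolding L_def by blast
  then obtain B bs' where bs: "bs = B # bs'" by (cases bs) auto
  have "B \<subseteq> S" using h(3) bs by auto
  moreover have "Lw g B" using h(2) bs by simp
  ultimately show ?thesis by blast
qed

lemma Lw_down: "Lw (Suc g) S \<Longrightarrow> 1 \<le> Min S \<Longrightarrow> Lw g S"
proof -
  assume a: "Lw (Suc g) S" "1 \<le> Min S"
  then have LS: "L g (Min S) (S - {Min S})" and "finite S" unfolding Lw_Suc' by blast+
  have "L g (Suc 0) (S - {Min S})" by (rule L_le[OF LS]) (use a(2) in linarith)
  then obtain B where B: "B \<subseteq> S - {Min S}" "Lw g B" by (auto dest!: L_1)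
  show ?thesis by (rule Lw_mono[OF B(2) _ \<open>finite S\<close>]) (use B(1) in blast)
qed

lemma Lw_down_add: "Lw (g + d) S \<Longrightarrow> 1 \<le> Min S \<Longrightarrow> Lw g S"
proof (induction d)
  case (Suc d)
  then have "Lw (Suc (g + d)) S" "1 \<le> Min S" by (simp_all only: add_Suc_right)
  then have "Lw (g + d) S" by (rule Lw_down)
  then show ?case using Suc by blast
next
  case 0
  then show ?case by (simp only: add_0_right)
qed

lemma L_cons: assumes h0: "Lw g B" "B \<subseteq> S" "L g k T" "T \<subseteq> S" "lessset B T" shows "L g (Suc k) S"
proof -
  obtain bs where h: "length bs = k" "\<forall>B\<in>set bs. Lw g B" "sorted_wrt lessset bs" "\<Union> (set bs) \<subseteq> T"
    using h0 unfolding L_def by blast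
  show ?thesis unfolding L_def
  proof (rule exI[of _ "B # bs"], intro conjI)
    show "sorted_wrt lessset (B # bs)"
      using h h0(5) unfolding sorted_wrt.simps(2) lessset_def by blast
    show "length (B # bs) = Suc k" using h by simp
    show "\<forall>C\<in>set (B # bs). Lw g C" using h(2) h0(1) by simp
    show "\<Union> (set (B # bs)) \<subseteq> S" using h(4) h0(2,4) by auto
  qed
qed



lemma sparse_sub: "exp_sparse S \<Longrightarrow> T \<subseteq> S \<Longrightarrow> exp_sparse T"
  unfolding exp_sparse_def by blast

lemma four_mul_le: "4 * m \<le> (4::nat) ^ m"
proof (induction m)
  case (Suc m)
  have "1 \<le> (4::nat) ^ m" by simp
  moreover have "4 * Suc m = 4 * m + 4" by simp
  ultimately show ?case using Suc.IH unfolding power_Suc by arith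
qed simp

lemma sparse_div4:
  assumes "exp_sparse S" "m \<in> S" "c \<in> S" "m < c"
  shows "m \<le> c div 4"
proof -
  have "4 ^ m < c" using assms unfolding exp_sparse_def by blast
  then have "m * 4 \<le> c" using four_mul_le[of m] by arith
  then show ?thesis using less_eq_div_iff_mult_less_eq[of 4 m c] by simp
qed

lemma combine:
  assumes pair: "\<And>C1 C2. Lw a C1 \<Longrightarrow> Lw a C2 \<Longrightarrow> C1 \<subseteq> S0 \<Longrightarrow> C2 \<subseteq> S0 \<Longrightarrow> lessset C1 C2 \<Longrightarrow>
      \<exists>p. p \<subseteq> C1 \<union> C2 \<and> Lw a p \<and> (p \<subseteq> A \<or> p \<subseteq> B)"
  shows "\<forall>kA kB bs S. kA + kB = m \<longrightarrow> 2*(kA+kB) \<le> length bs \<longrightarrow> (\<forall>C\<in>set bs. Lw a C) \<longrightarrow>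
     sorted_wrt lessset bs \<longrightarrow> \<Union>(set bs) \<subseteq> S \<longrightarrow> S \<subseteq> S0 \<longrightarrow> L a kA (S \<inter> A) \<or> L a kB (S \<inter> B)"
proof (induction m)
  case 0
  then show ?case by simp
next
  case (Suc m)
  show ?case
  proof (intro allI impI)
    fix kA kB bs S
    assume h: "kA + kB = Suc m" "2*(kA+kB) \<le> length bs" "\<forall>C\<in>set bs. Lw a C"
      "sorted_wrt lessset bs" "\<Union>(set bs) \<subseteq> S" "S \<subseteq> S0"
    show "L a kA (S \<inter> A) \<or> L a kB (S \<inter> B)"
    proof (cases "kA = 0 \<or> kB = 0")
      case True
      then show ?thesis by auto
    next
      case False
      then have k1: "1 \<le> kA" "1 \<le> kB" by auto
      then have "4 \<le> length bs" using h(2) by arith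
      then obtain C1 t where "bs = C1 # t" by (cases bs) auto
      moreover then obtain C2 rest where "t = C2 # rest" using \<open>4 \<le> length bs\<close> by (cases t) auto
      ultimately have bs: "bs = C1 # C2 # rest" by simp
      have C1: "Lw a C1" "C1 \<subseteq> S0" and C2: "Lw a C2" "C2 \<subseteq> S0"
        using h(3,5,6) bs by auto
      have lC: "lessset C1 C2" using h(4) bs by simp
      obtain p where p: "p \<subseteq> C1 \<union> C2" "Lw a p" "p \<subseteq> A \<or> p \<subseteq> B"
        using pair[OF C1(1) C2(1) C1(2) C2(2) lC] by blast
      define S' where "S' = \<Union>(set rest)"
      have rest: "\<forall>C\<in>set rest. Lw a C" "sorted_wrt lessset rest" "\<Union>(set rest) \<subseteq> S'" "S' \<subseteq> S0"
        using h(3,4,5,6) bs unfolding S'_def by auto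
      have S'S: "S' \<subseteq> S" using h(5) bs unfolding S'_def by auto
      have pS: "p \<subseteq> S" using p(1) h(5) bs by auto
      have lp: "lessset p S'"
      proof -
        have "\<forall>C\<in>set rest. lessset C1 C \<and> lessset C2 C" using h(4) bs by simp
        then show ?thesis using p(1) unfolding lessset_def S'_def by blast
      qed
      have lenr: "length rest = length bs - 2" using bs by simp
      from p(3) show ?thesis
      proof
        assume pA: "p \<subseteq> A"
        have "(kA - 1) + kB = m" using h(1) False by arith
        moreover have "2*((kA - 1)+kB) \<le> length rest" using h(2) lenr False by arith
        ultimately have "L a (kA - 1) (S' \<inter> A) \<or> L a kB (S' \<inter> B)"
          using Suc.IH[rule_format, of "kA - 1" kB rest S'] rest by blast
        then show ?thesis
        proof
          assume a1: "L a (kA - 1) (S' \<inter> A)"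
          have "p \<subseteq> S \<inter> A" using pS pA by blast
          moreover have "S' \<inter> A \<subseteq> S \<inter> A" using S'S by blast
          moreover have "lessset p (S' \<inter> A)" using lp unfolding lessset_def by blast
          ultimately have "L a (Suc (kA - 1)) (S \<inter> A)"
            using L_cons[OF p(2) _ a1] by blast
          then show ?thesis using False by simp
        next
          assume a1: "L a kB (S' \<inter> B)"
          have "S' \<inter> B \<subseteq> S \<inter> B" using S'S by blast
          from L_mono[OF a1 this] show ?thesis by blast
        qed
      next
        assume pB: "p \<subseteq> B"
        have "kA + (kB - 1) = m" using h(1) False by arith
        moreover have "2*(kA + (kB - 1)) \<le> length rest" using h(2) lenr False by arith
        ultimately have "L a kA (S' \<inter> A) \<or> L a (kB - 1) (S' \<inter> B)"
          using Suc.IH[rule_format, of kA "kB - 1" rest S'] rest by blast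
        then show ?thesis
        proof
          assume a1: "L a (kB - 1) (S' \<inter> B)"
          have "p \<subseteq> S \<inter> B" using pS pB by blast
          moreover have "S' \<inter> B \<subseteq> S \<inter> B" using S'S by blast
          moreover have "lessset p (S' \<inter> B)" using lp unfolding lessset_def by blast
          ultimately have "L a (Suc (kB - 1)) (S \<inter> B)"
            using L_cons[OF p(2) _ a1] by blast
          then show ?thesis using False by simp
        next
          assume a1: "L a kA (S' \<inter> A)"
          have "S' \<inter> A \<subseteq> S \<inter> A" using S'S by blast
          from L_mono[OF a1 this] show ?thesis by blast
        qed
      qed
    qed
  qed
qed



lemma piece:
  assumes sp: "exp_sparse S" and C1: "Lw (Suc a) C1" "C1 \<subseteq> S" and C2: "C2 \<subseteq> S" "finite C2" "C2 \<noteq> {}"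
    and l: "lessset C1 C2" and LD: "L a (Min C2 div 4) ((C2 - {Min C2}) \<inter> W)" and cov: "S \<subseteq> W \<union> W'"
  shows "\<exists>p. p \<subseteq> C1 \<union> C2 \<and> Lw (Suc a) p \<and> (p \<subseteq> W \<or> p \<subseteq> W')"
proof (cases "C1 \<inter> W = {}")
  case True
  then have "C1 \<subseteq> W'" using C1(2) cov by blast
  then show ?thesis using C1(1) by blast
next
  case False
  then obtain m where m: "m \<in> C1" "m \<in> W" by blast
  define D where "D = (C2 - {Min C2}) \<inter> W"
  define p where "p = insert m D"
  have cin: "Min C2 \<in> C2" using C2 by simp
  have mlt: "\<forall>y\<in>C2. m < y" using l m(1) unfolding lessset_def by blast
  have fD: "finite D" using C2(2) unfolding D_def by simp
  have mD: "m \<notin> D" using mlt unfolding D_def by blast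
  have minp: "Min p = m"
    unfolding p_def
  proof (rule Min_eqI)
    show "finite (insert m D)" using fD by simp
    show "m \<in> insert m D" by simp
    fix y assume "y \<in> insert m D"
    then show "m \<le> y" using mlt unfolding D_def by auto
  qed
  have pm: "p - {Min p} = D" using minp mD unfolding p_def by auto
  have "m \<le> Min C2 div 4"
    by (rule sparse_div4[OF sp]) (use m C1(2) cin C2(1) mlt in auto)
  then have "L a m D" using LD L_le unfolding D_def by blast
  then have "Lw (Suc a) p" unfolding Lw_Suc' using pm minp fD unfolding p_def by simp
  moreover have "p \<subseteq> C1 \<union> C2" using m(1) unfolding p_def D_def by blast
  moreover have "p \<subseteq> W" using m(2) unfolding p_def D_def by blast
  ultimately show ?thesis by blast
qed

lemma PL: "exp_sparse S \<Longrightarrow> L a (2*(kA+kB)) S \<Longrightarrow> S \<subseteq> A \<union> B \<Longrightarrow> L a kA (S \<inter> A) \<or> L a kB (S \<inter> B)"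
proof (induction a arbitrary: S kA kB A B)
  case 0
  have pair: "\<exists>p. p \<subseteq> C1 \<union> C2 \<and> Lw 0 p \<and> (p \<subseteq> A \<or> p \<subseteq> B)"
    if "Lw 0 C1" "C1 \<subseteq> S" for C1 C2
  proof -
    have "C1 \<noteq> {}" using that(1) by simp
    then obtain m where "m \<in> C1" by blast
    then have "{m} \<subseteq> C1 \<union> C2" "Lw 0 {m}" "{m} \<subseteq> A \<or> {m} \<subseteq> B" using that(2) "0.prems"(3) by auto
    then show ?thesis by blast
  qed
  obtain bs where bs: "length bs = 2*(kA+kB)" "\<forall>C\<in>set bs. Lw 0 C" "sorted_wrt lessset bs" "\<Union>(set bs) \<subseteq> S"
    using "0.prems"(2) unfolding L_def by blast
  show ?case
    using combine[of 0 S A B "kA + kB", OF pair, rule_format, of kA kB bs S] bs by auto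
next
  case (Suc a)
  have pair: "\<exists>p. p \<subseteq> C1 \<union> C2 \<and> Lw (Suc a) p \<and> (p \<subseteq> A \<or> p \<subseteq> B)"
    if C: "Lw (Suc a) C1" "Lw (Suc a) C2" "C1 \<subseteq> S" "C2 \<subseteq> S" "lessset C1 C2" for C1 C2
  proof -
    define c where "c = Min C2"
    define D where "D = C2 - {c}"
    have fC2: "finite C2" "C2 \<noteq> {}" using C(2) Lw_ne by auto
    have LD: "L a c D" using C(2) unfolding Lw_Suc' c_def D_def by blast
    have "2 * (c div 4 + c div 4) \<le> c" by simp
    then have LD': "L a (2 * (c div 4 + c div 4)) D" using L_le[OF LD] by blast
    have spD: "exp_sparse D" using sparse_sub[OF Suc.prems(1)] C(4) unfolding D_def by blast
    have covD: "D \<subseteq> A \<union> B" using C(4) Suc.prems(3) unfolding D_def by blast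
    have "L a (c div 4) (D \<inter> A) \<or> L a (c div 4) (D \<inter> B)"
      using Suc.IH[OF spD LD' covD] .
    then show ?thesis
    proof
      assume "L a (c div 4) (D \<inter> A)"
      then show ?thesis
        using piece[OF Suc.prems(1) C(1) C(3) C(4) fC2 C(5), of A B] Suc.prems(3) unfolding c_def D_def by blast
    next
      assume "L a (c div 4) (D \<inter> B)"
      moreover have "S \<subseteq> B \<union> A" using Suc.prems(3) by blast
      ultimately obtain p where "p \<subseteq> C1 \<union> C2" "Lw (Suc a) p" "p \<subseteq> B \<or> p \<subseteq> A"
        using piece[OF Suc.prems(1) C(1) C(3) C(4) fC2 C(5), of B A] unfolding c_def D_def by blast
      then show ?thesis by blast
    qed
  qed
  obtain bs where bs: "length bs = 2*(kA+kB)" "\<forall>C\<in>set bs. Lw (Suc a) C" "sorted_wrt lessset bs" "\<Union>(set bs) \<subseteq> S"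
    using Suc.prems(2) unfolding L_def by blast
  show ?case
    using combine[of "Suc a" S A B "kA + kB", OF pair, rule_format, of kA kB bs S] bs by auto
qed

lemma PLiter:
  fixes col :: "nat \<Rightarrow> nat \<Rightarrow> bool"
  assumes "finite Q"
  shows "exp_sparse S \<Longrightarrow> L a (4 ^ card Q * k) S \<Longrightarrow>
    \<exists>S'\<subseteq>S. L a k S' \<and> (\<forall>q\<in>Q. \<forall>x\<in>S'. \<forall>y\<in>S'. col q x = col q y)"
  using assms
proof (induction Q arbitrary: S rule: finite_induct)
  case empty
  then show ?case by auto
next
  case (insert q Q)
  define A where "A = {z. col q z}"
  define B where "B = {z. \<not> col q z}"
  have eq: "4 ^ card (insert q Q) * k = 2 * (4 ^ card Q * k + 4 ^ card Q * k)"
    using insert(1,2) by simp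
  have cov: "S \<subseteq> A \<union> B" unfolding A_def B_def by blast
  have "L a (4 ^ card Q * k) (S \<inter> A) \<or> L a (4 ^ card Q * k) (S \<inter> B)"
    using PL[OF insert.prems(1) _ cov] insert.prems(2) unfolding eq by blast
  then obtain S1 where S1: "S1 \<subseteq> S" "L a (4 ^ card Q * k) S1" "\<forall>x\<in>S1. \<forall>y\<in>S1. col q x = col q y"
    unfolding A_def B_def by blast
  have spS1: "exp_sparse S1" using sparse_sub[OF insert.prems(1) S1(1)] .
  obtain S' where S': "S' \<subseteq> S1" "L a k S'" "\<forall>q\<in>Q. \<forall>x\<in>S'. \<forall>y\<in>S'. col q x = col q y"
    using insert.IH[OF spS1 S1(2)] by blast
  have h1: "S' \<subseteq> S" using S'(1) S1(1) by (rule subset_trans)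
  have h2: "\<forall>x\<in>S'. \<forall>y\<in>S'. col q x = col q y" using S'(1) S1(3) by (meson subsetD)
  have h3: "\<forall>q'\<in>insert q Q. \<forall>x\<in>S'. \<forall>y\<in>S'. col q' x = col q' y"
    using h2 S'(3) by (metis insert_iff)
  show ?case using h1 S'(2) h3 by blast
qed

lemma thin:
  fixes col :: "nat \<Rightarrow> nat \<Rightarrow> bool"
  assumes "Lw (Suc g) D" "exp_sparse D" "finite Q" "4 ^ card Q \<le> Min D"
  shows "\<exists>D'\<subseteq>D. Lw g D' \<and> (\<forall>q\<in>Q. \<forall>x\<in>D'. \<forall>y\<in>D'. col q x = col q y)"
proof -
  have LD: "L g (Min D) (D - {Min D})" using assms(1) unfolding Lw_Suc' by blast
  have h1: "L g (4 ^ card Q * 1) (D - {Min D})" using L_le[OF LD] assms(4) by simp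
  have h2: "exp_sparse (D - {Min D})" using sparse_sub[OF assms(2)] by blast
  obtain S' where S': "S' \<subseteq> D - {Min D}" "L g 1 S'" "\<forall>q\<in>Q. \<forall>x\<in>S'. \<forall>y\<in>S'. col q x = col q y"
    using PLiter[where col=col, OF assms(3) h2 h1] by blast
  have "L g (Suc 0) S'" using S'(2) by simp
  then obtain B where B: "B \<subseteq> S'" "Lw g B" using L_1[of g 0 S'] by blast
  have "B \<subseteq> D" using B(1) S'(1) by blast
  moreover have "\<forall>q\<in>Q. \<forall>x\<in>B. \<forall>y\<in>B. col q x = col q y" using B(1) S'(3) by (meson subsetD)
  ultimately show ?thesis using B(2) by blast
qed

lemma count_sparse:
  assumes sp: "exp_sparse X"
  shows "t \<in> X \<Longrightarrow> 4 ^ card (X \<inter> {..<t}) \<le> t"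
proof (induction t rule: less_induct)
  case (less t)
  show ?case
  proof (cases "X \<inter> {..<t} = {}")
    case True
    then show ?thesis using less.prems sp unfolding exp_sparse_def by auto
  next
    case False
    define s where "s = Max (X \<inter> {..<t})"
    have fin: "finite (X \<inter> {..<t})" by simp
    have sin: "s \<in> X" "s < t" using Max_in[OF fin False] unfolding s_def by auto
    have eq: "X \<inter> {..<t} = insert s (X \<inter> {..<s})"
    proof
      show "X \<inter> {..<t} \<subseteq> insert s (X \<inter> {..<s})"
      proof
        fix x assume x: "x \<in> X \<inter> {..<t}"
        then have "x \<le> s" using Max_ge[OF fin] unfolding s_def by blast
        then show "x \<in> insert s (X \<inter> {..<s})" using x by auto
      qed
      show "insert s (X \<inter> {..<s}) \<subseteq> X \<inter> {..<t}" using sin by auto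
    qed
    have c: "card (X \<inter> {..<t}) = Suc (card (X \<inter> {..<s}))"
      unfolding eq by (subst card_insert_disjoint) auto
    have IH: "4 ^ card (X \<inter> {..<s}) \<le> s" using less.IH[OF sin(2) sin(1)] .
    have "4 ^ s < t" using sp sin less.prems unfolding exp_sparse_def by blast
    moreover have "4 * s \<le> 4 ^ s" by (rule four_mul_le)
    ultimately show ?thesis unfolding c power_Suc using IH by arith
  qed
qed



lemma greedy:
  fixes c :: "nat \<Rightarrow> nat \<Rightarrow> bool"
  shows "finite J \<Longrightarrow> 2 ^ m \<le> card J \<Longrightarrow>
    \<exists>I\<subseteq>J. Min J \<in> I \<and> m + 1 \<le> card I \<and> (\<exists>h. \<forall>i\<in>I. \<forall>j\<in>I. i < j \<longrightarrow> c i j = h i)"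
proof (induction m arbitrary: J)
  case 0
  then have ne: "J \<noteq> {}" by auto
  have "{Min J} \<subseteq> J" using Min_in[OF "0.prems"(1) ne] by simp
  moreover have "\<forall>i\<in>{Min J}. \<forall>j\<in>{Min J}. i < j \<longrightarrow> c i j = (\<lambda>_. True) i" by simp
  moreover have "Min J \<in> {Min J}" "0 + 1 \<le> card {Min J}" by simp_all
  ultimately show ?case by blast
next
  case (Suc m)
  have ne: "J \<noteq> {}" using Suc.prems(2) by (metis card.empty le_zero_eq nat_power_eq_Suc_0_iff numeral_2_eq_2 power_not_zero zero_neq_numeral)
  define j0 where "j0 = Min J"
  have j0J: "j0 \<in> J" using Min_in[OF Suc.prems(1) ne] unfolding j0_def .
  define J1 where "J1 = {j\<in>J - {j0}. c j0 j}"
  define J0 where "J0 = {j\<in>J - {j0}. \<not> c j0 j}"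
  have un: "J - {j0} = J1 \<union> J0" unfolding J1_def J0_def by blast
  have dj: "J1 \<inter> J0 = {}" unfolding J1_def J0_def by blast
  have fin: "finite J1" "finite J0" using Suc.prems(1) unfolding J1_def J0_def by auto
  have cJ': "card (J - {j0}) = card J - 1" using j0J Suc.prems(1) by simp
  have csum: "card J1 + card J0 = card J - 1"
    using card_Un_disjoint[OF fin dj] un cJ' by simp
  have p2: "(2::nat) ^ Suc m = 2 * 2 ^ m" by simp
  obtain Jc b where Jc: "Jc \<subseteq> J - {j0}" "finite Jc" "2 ^ m \<le> card Jc" "\<forall>j\<in>Jc. c j0 j = b"
  proof (cases "2 ^ m \<le> card J1")
    case True
    have a1: "J1 \<subseteq> J - {j0}" "\<forall>j\<in>J1. c j0 j = True" unfolding J1_def by auto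
    show ?thesis by (rule that[OF a1(1) fin(1) True a1(2)])
  next
    case False
    then have c0: "2 ^ m \<le> card J0" using csum Suc.prems(2) p2 by arith
    have a1: "J0 \<subseteq> J - {j0}" "\<forall>j\<in>J0. c j0 j = False" unfolding J0_def by auto
    show ?thesis by (rule that[OF a1(1) fin(2) c0 a1(2)])
  qed
  obtain I' h' where I': "I' \<subseteq> Jc" "Min Jc \<in> I'" "m + 1 \<le> card I'" "\<forall>i\<in>I'. \<forall>j\<in>I'. i < j \<longrightarrow> c i j = h' i"
    using Suc.IH[OF Jc(2) Jc(3)] by blast
  define I where "I = insert j0 I'"
  define h where "h = h'(j0 := b)"
  have j0n: "j0 \<notin> I'" using I'(1) Jc(1) by blast
  have finI': "finite I'" using I'(1) Jc(2) finite_subset by blast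
  have "I \<subseteq> J" using I'(1) Jc(1) j0J unfolding I_def by blast
  moreover have "Min J \<in> I" unfolding I_def j0_def by simp
  moreover have "Suc m + 1 \<le> card I" unfolding I_def using card_insert_disjoint[OF finI' j0n] I'(3) by simp
  moreover have "\<forall>i\<in>I. \<forall>j\<in>I. i < j \<longrightarrow> c i j = h i"
  proof (intro ballI impI)
    fix i j assume ij: "i \<in> I" "j \<in> I" "i < j"
    have minle: "\<forall>x\<in>J. j0 \<le> x" using Suc.prems(1) unfolding j0_def by simp
    have "i \<in> J" "j \<in> J" using ij \<open>I \<subseteq> J\<close> by auto
    then have jn: "j \<noteq> j0" using minle ij(3) by fastforce
    then have jI': "j \<in> I'" using ij(2) unfolding I_def by simp
    show "c i j = h i"
    proof (cases "i = j0")
      case True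
      then show ?thesis using Jc(4) I'(1) jI' unfolding h_def by auto
    next
      case False
      then have "i \<in> I'" using ij(1) unfolding I_def by simp
      then show ?thesis using I'(4) jI' ij(3) False unfolding h_def by simp
    qed
  qed
  ultimately show ?case by blast
qed

lemma blocks_trans:
  fixes Z :: "nat \<Rightarrow> nat set" and I :: "nat set"
  assumes tr: "\<forall>i\<in>I. transitive_on P (Z i)"
    and ord: "\<forall>i\<in>I. \<forall>j\<in>I. i < j \<longrightarrow> lessset (Z i) (Z j)"
    and cr: "\<forall>i\<in>I. \<forall>j\<in>I. i < j \<longrightarrow> (\<forall>x\<in>Z i. \<forall>z\<in>Z j. P x z = h i)"
  shows "transitive_on P (\<Union>i\<in>I. Z i)"
  unfolding transitive_on_def
proof (intro ballI impI)
  fix x y z assume xyz: "x \<in> (\<Union>i\<in>I. Z i)" "y \<in> (\<Union>i\<in>I. Z i)" "z \<in> (\<Union>i\<in>I. Z i)"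
    and h: "x < y \<and> y < z \<and> P x y = P y z"
  obtain i j l where ijl: "i \<in> I" "x \<in> Z i" "j \<in> I" "y \<in> Z j" "l \<in> I" "z \<in> Z l" using xyz by blast
  have le: "i \<le> j" "j \<le> l"
  proof -
    show "i \<le> j"
    proof (rule ccontr)
      assume "\<not> i \<le> j"
      then have "j < i" by simp
      then have "lessset (Z j) (Z i)" using ord ijl by blast
      then show False using ijl h unfolding lessset_def by fastforce
    qed
    show "j \<le> l"
    proof (rule ccontr)
      assume "\<not> j \<le> l"
      then have "l < j" by simp
      then have "lessset (Z l) (Z j)" using ord ijl by blast
      then show False using ijl h unfolding lessset_def by fastforce
    qed
  qed
  show "P x z = P x y"
  proof (cases "i = j")
    case ij: True
    show ?thesis
    proof (cases "j = l")
      case True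
      then have "transitive_on P (Z i)" "x \<in> Z i" "y \<in> Z i" "z \<in> Z i" using tr ijl ij by auto
      then show ?thesis using h unfolding transitive_on_def by blast
    next
      case False
      then have jl: "j < l" using le by simp
      have "P x z = h i" using cr ijl jl ij by blast
      moreover have "P y z = h i" using cr ijl jl ij by blast
      ultimately show ?thesis using h by simp
    qed
  next
    case False
    then have "i < j" "i < l" using le by auto
    then have "P x y = h i" "P x z = h i" using cr ijl by blast+
    then show ?thesis by simp
  qed
qed



lemma fund_app: "\<gamma> \<noteq> [] \<Longrightarrow> fund (\<beta> @ \<gamma>) m = \<beta> @ fund \<gamma> m"
  unfolding fund_def by (simp add: butlast_append)

lemma fund_single_Suc: "fund [Suc e] x = replicate x e"
  unfolding fund_def by simp

lemma fund_single_0: "fund [0] x = []"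
  unfolding fund_def by simp

lemma foldl_fund_nil: "foldl fund [] xs = []"
proof (induction xs)
  case (Cons x xs)
  have "fund [] x = []" unfolding fund_def by simp
  then show ?case using Cons by simp
qed simp

lemma split_foldl: "foldl fund (\<beta> @ \<gamma>) xs = [] \<Longrightarrow>
  \<exists>ys zs. xs = ys @ zs \<and> foldl fund \<gamma> ys = [] \<and> foldl fund \<beta> zs = []"
proof (induction xs arbitrary: \<gamma>)
  case Nil
  then show ?case by simp
next
  case (Cons x xs)
  show ?case
  proof (cases "\<gamma> = []")
    case True
    then show ?thesis using Cons.prems by (intro exI[of _ "[]"] exI[of _ "x # xs"]) simp
  next
    case False
    have "foldl fund (\<beta> @ fund \<gamma> x) xs = []" using Cons.prems fund_app[OF False] by simp
    then obtain ys zs where "xs = ys @ zs" "foldl fund (fund \<gamma> x) ys = []" "foldl fund \<beta> zs = []"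
      using Cons.IH by blast
    then show ?thesis by (intro exI[of _ "x # ys"] exI[of _ zs]) simp
  qed
qed

lemma rep_snoc: "replicate (Suc k) e = replicate k e @ [e]"
  by (simp add: replicate_append_same)

lemma sorted_distinct_less: "sorted (ys @ zs) \<Longrightarrow> distinct (ys @ zs) \<Longrightarrow> lessset (set ys) (set zs)"
  unfolding lessset_def sorted_append distinct_append
  by (metis disjoint_iff order_le_neq_trans)

lemma R1_rep:
  assumes IH: "\<And>xs. sorted xs \<Longrightarrow> distinct xs \<Longrightarrow> foldl fund [e] xs = [] \<Longrightarrow> Lw e (set xs)"
  shows "sorted xs \<Longrightarrow> distinct xs \<Longrightarrow> foldl fund (replicate k e) xs = [] \<Longrightarrow> L e k (set xs)"
proof (induction k arbitrary: xs)
  case 0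
  then show ?case by simp
next
  case (Suc k)
  have "foldl fund (replicate k e @ [e]) xs = []" using Suc.prems(3) unfolding rep_snoc .
  then obtain ys zs where yz: "xs = ys @ zs" "foldl fund [e] ys = []" "foldl fund (replicate k e) zs = []"
    using split_foldl by blast
  have s: "sorted ys" "distinct ys" "sorted zs" "distinct zs"
    using Suc.prems(1,2) yz(1) by (simp_all add: sorted_append)
  have "Lw e (set ys)" using IH[OF s(1,2) yz(2)] .
  moreover have "L e k (set zs)" using Suc.IH[OF s(3,4) yz(3)] .
  moreover have "lessset (set ys) (set zs)" using sorted_distinct_less Suc.prems(1,2) yz(1) by blast
  moreover have "set ys \<subseteq> set xs" "set zs \<subseteq> set xs" using yz(1) by auto
  ultimately show ?case using L_cons by blast
qed

lemma R1: "sorted xs \<Longrightarrow> distinct xs \<Longrightarrow> foldl fund [e] xs = [] \<Longrightarrow> Lw e (set xs)"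
proof (induction e arbitrary: xs)
  case 0
  then have "xs \<noteq> []" by auto
  then show ?case by simp
next
  case (Suc e)
  then obtain x xs' where xs: "xs = x # xs'" by (cases xs) auto
  have f: "foldl fund (replicate x e) xs' = []" using Suc.prems(3) unfolding xs by (simp add: fund_single_Suc)
  have s: "sorted xs'" "distinct xs'" "x \<notin> set xs'" "\<forall>y\<in>set xs'. x \<le> y" using Suc.prems(1,2) xs by auto
  have L: "L e x (set xs')" using R1_rep[OF Suc.IH s(1,2) f] by blast
  have mn: "Min (set xs) = x" unfolding xs using s(4) by (intro Min_eqI) auto
  have "set xs - {x} = set xs'" unfolding xs using s(3) by auto
  then have "set xs - {Min (set xs)} = set xs'" unfolding mn .
  then show ?case unfolding Lw_Suc' using L mn xs by simp
qed

lemma foldl_nz: "(\<forall>j<length ys. foldl fund \<gamma> (take j ys) \<noteq> []) \<Longrightarrow> foldl fund (\<beta> @ \<gamma>) ys = \<beta> @ foldl fund \<gamma> ys"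
proof (induction ys arbitrary: \<gamma>)
  case Nil
  then show ?case by simp
next
  case (Cons y ys)
  have g: "\<gamma> \<noteq> []" using Cons.prems[rule_format, of 0] by simp
  have "\<forall>j<length ys. foldl fund (fund \<gamma> y) (take j ys) \<noteq> []"
  proof (intro allI impI)
    fix j assume "j < length ys"
    then show "foldl fund (fund \<gamma> y) (take j ys) \<noteq> []" using Cons.prems[rule_format, of "Suc j"] by simp
  qed
  then show ?case using Cons.IH fund_app[OF g] by simp
qed

lemma exact_prefix:
  assumes "foldl fund \<gamma> ys = []"
  shows "\<exists>j. foldl fund \<gamma> (take j ys) = [] \<and> (\<forall>j'<length (take j ys). foldl fund \<gamma> (take j' (take j ys)) \<noteq> [])"
proof -
  define j where "j = (LEAST j. foldl fund \<gamma> (take j ys) = [])"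
  have ex: "foldl fund \<gamma> (take (length ys) ys) = []" using assms by simp
  have j1: "foldl fund \<gamma> (take j ys) = []" unfolding j_def by (rule LeastI[where P="\<lambda>j. foldl fund \<gamma> (take j ys) = []", OF ex])
  have j2: "\<forall>j'<j. foldl fund \<gamma> (take j' ys) \<noteq> []" unfolding j_def using not_less_Least by blast
  have "\<forall>j'<length (take j ys). foldl fund \<gamma> (take j' (take j ys)) \<noteq> []"
  proof (intro allI impI)
    fix j' assume "j' < length (take j ys)"
    then have "j' < j" by simp
    then show "foldl fund \<gamma> (take j' (take j ys)) \<noteq> []" using j2 by (simp add: min_def)
  qed
  then show ?thesis using j1 by blast
qed

lemma R2_rep:
  assumes IH: "\<And>B. Lw e B \<Longrightarrow> \<exists>ys. sorted ys \<and> distinct ys \<and> set ys \<subseteq> B \<and> foldl fund [e] ys = []"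
  shows "(\<forall>B\<in>set bs. Lw e B) \<Longrightarrow> sorted_wrt lessset bs \<Longrightarrow>
    \<exists>ys. sorted ys \<and> distinct ys \<and> set ys \<subseteq> \<Union>(set bs) \<and> foldl fund (replicate (length bs) e) ys = []"
proof (induction bs)
  case Nil
  then show ?case by (intro exI[of _ "[]"]) simp
next
  case (Cons B bs)
  obtain ys0 where y0: "sorted ys0" "distinct ys0" "set ys0 \<subseteq> B" "foldl fund [e] ys0 = []"
    using IH[of B] Cons.prems(1) by auto
  obtain j where j: "foldl fund [e] (take j ys0) = []" "\<forall>j'<length (take j ys0). foldl fund [e] (take j' (take j ys0)) \<noteq> []"
    using exact_prefix[OF y0(4)] by blast
  define ys where "ys = take j ys0"
  have ys: "sorted ys" "distinct ys" "set ys \<subseteq> B"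
    using y0 unfolding ys_def by (auto simp: sorted_wrt_take dest: in_set_takeD)
  obtain zs where zs: "sorted zs" "distinct zs" "set zs \<subseteq> \<Union>(set bs)" "foldl fund (replicate (length bs) e) zs = []"
    using Cons.IH Cons.prems by auto
  have lt: "\<forall>x\<in>set ys. \<forall>y\<in>set zs. x < y"
  proof (intro ballI)
    fix x y assume x: "x \<in> set ys" and y: "y \<in> set zs"
    then obtain C where "C \<in> set bs" "y \<in> C" using zs(3) by blast
    moreover have "\<forall>C\<in>set bs. lessset B C" using Cons.prems(2) by simp
    ultimately show "x < y" using x ys(3) unfolding lessset_def by blast
  qed
  have "sorted (ys @ zs)" using ys(1) zs(1) lt by (auto simp: sorted_append less_imp_le)
  moreover have "distinct (ys @ zs)" using ys(2) zs(2) lt by auto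
  moreover have "set (ys @ zs) \<subseteq> \<Union>(set (B # bs))" using ys(3) zs(3) by auto
  moreover have "foldl fund (replicate (length (B # bs)) e) (ys @ zs) = []"
  proof -
    have "foldl fund (replicate (length bs) e @ [e]) ys = replicate (length bs) e @ foldl fund [e] ys"
      by (rule foldl_nz) (use j(2) in \<open>simp add: ys_def\<close>)
    then have "foldl fund (replicate (length bs) e @ [e]) ys = replicate (length bs) e"
      using j(1) unfolding ys_def by simp
    then show ?thesis using zs(4) by (simp add: rep_snoc del: replicate.simps)
  qed
  ultimately show ?case by blast
qed

lemma R2: "Lw e S \<Longrightarrow> \<exists>ys. sorted ys \<and> distinct ys \<and> set ys \<subseteq> S \<and> foldl fund [e] ys = []"
proof (induction e arbitrary: S)
  case 0
  then have "Min S \<in> S" by simp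
  then show ?case by (intro exI[of _ "[Min S]"]) (simp add: fund_single_0)
next
  case (Suc e)
  have fS: "finite S" "S \<noteq> {}" using Suc.prems Lw_ne by blast+
  define s where "s = Min S"
  obtain bs where bs: "length bs = s" "\<forall>B\<in>set bs. Lw e B" "sorted_wrt lessset bs" "\<Union>(set bs) \<subseteq> S - {s}"
    using Suc.prems unfolding Lw_Suc' L_def s_def by blast
  obtain zs where zs: "sorted zs" "distinct zs" "set zs \<subseteq> \<Union>(set bs)" "foldl fund (replicate (length bs) e) zs = []"
    using R2_rep[OF Suc.IH bs(2,3)] by blast
  have sS: "s \<in> S" "\<forall>y\<in>S. s \<le> y" using fS unfolding s_def by auto
  have zS: "set zs \<subseteq> S - {s}" using zs(3) bs(4) by blast
  have "sorted (s # zs)" using zs(1) zS sS by auto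
  moreover have "distinct (s # zs)" using zs(2) zS by auto
  moreover have "set (s # zs) \<subseteq> S" using zS sS by auto
  moreover have "foldl fund [Suc e] (s # zs) = []" using zs(4) bs(1) by (simp add: fund_single_Suc)
  ultimately show ?case by blast
qed



lemma trans_single: "transitive_on P {a}"
  unfolding transitive_on_def by auto

lemma main:
  fixes P :: "nat \<Rightarrow> nat \<Rightarrow> bool"
  shows "finite X \<Longrightarrow> exp_sparse X \<Longrightarrow> Lw (4 * n) X \<Longrightarrow> \<exists>Y\<subseteq>X. Lw n Y \<and> transitive_on P Y"
proof (induction n arbitrary: X)
  case 0
  then have ne: "X \<noteq> {}" by simp
  have "{Min X} \<subseteq> X" using Min_in[OF "0.prems"(1) ne] by simp
  moreover have "Lw 0 {Min X}" by simp
  ultimately show ?case using trans_single by blast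
next
  case (Suc n)
  have fX: "finite X" "X \<noteq> {}" using Suc.prems(3) Lw_ne by blast+
  have spX: "exp_sparse X" by (rule Suc.prems(2))
  have "4 * Suc n = Suc (Suc (Suc (Suc (4 * n))))" by simp
  then have LX: "Lw (Suc (Suc (Suc (Suc (4 * n))))) X" using Suc.prems(3) by metis
  define y0 where "y0 = Min X"
  have y0X: "y0 \<in> X" unfolding y0_def using Min_in[OF fX] .
  have y0le: "\<forall>x\<in>X. y0 \<le> x" unfolding y0_def using fX(1) by simp
  have y03: "3 \<le> y0" using spX y0X unfolding exp_sparse_def by blast
  have sparse_lt: "\<And>x y. x \<in> X \<Longrightarrow> y \<in> X \<Longrightarrow> x < y \<Longrightarrow> 4 ^ x < y" using spX unfolding exp_sparse_def by blast
  have L1: "L (Suc (Suc (Suc (4 * n)))) y0 (X - {y0})" using LX unfolding Lw_Suc' y0_def by blast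
  have "L (Suc (Suc (Suc (4 * n)))) (Suc 0) (X - {y0})" by (rule L_le[OF L1]) (use y03 in arith)
  then obtain B where B: "B \<subseteq> X - {y0}" "Lw (Suc (Suc (Suc (4 * n)))) B" by (auto dest!: L_1)
  have fB: "finite B" "B \<noteq> {}" using B(2) Lw_ne by blast+
  define b where "b = Min B"
  have bB: "b \<in> B" unfolding b_def using Min_in[OF fB] .
  have ble: "\<forall>x\<in>B. b \<le> x" unfolding b_def using fB(1) by simp
  have bX: "b \<in> X" "y0 < b" using bB B(1) y0le by force+
  obtain bs where bs: "length bs = b" "\<forall>E\<in>set bs. Lw (Suc (Suc (4 * n))) E" "sorted_wrt lessset bs"
      "\<Union>(set bs) \<subseteq> B - {b}"
    using B(2) unfolding Lw_Suc' L_def b_def by blast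
  define k where "k = 2 ^ y0 - (1::nat)"
  have "(2::nat) ^ y0 \<le> 4 ^ y0" by (simp add: power_mono)
  moreover have "4 ^ y0 < b" using sparse_lt[OF y0X bX(1) bX(2)] .
  ultimately have kb: "k < b" unfolding k_def by simp
  have pos2: "(1::nat) \<le> 2 ^ y0" by simp
  define R where "R j = (if j = 0 then {y0} else bs ! (j - 1))" for j
  have Rbs: "R j \<in> set bs" if "1 \<le> j" "j \<le> k" for j
    using that kb bs(1) unfolding R_def by auto
  have RLw: "Lw (Suc (Suc (4 * n))) (R j)" if "1 \<le> j" "j \<le> k" for j
    using bs(2) Rbs[OF that] by blast
  have RB: "R j \<subseteq> B - {b}" if "1 \<le> j" "j \<le> k" for j
    using bs(4) Rbs[OF that] by blast
  have RX: "R j \<subseteq> X" if "j \<le> k" for j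
  proof (cases "j = 0")
    case True then show ?thesis using y0X unfolding R_def by simp
  next
    case False
    then have "R j \<subseteq> B - {b}" using RB[of j] that by simp
    then show ?thesis using B(1) by blast
  qed
  have Rgtb: "\<forall>x\<in>R j. b < x" if "1 \<le> j" "j \<le> k" for j
    using RB[OF that] ble by force
  have Rne: "finite (R j) \<and> R j \<noteq> {}" if "j \<le> k" for j
  proof (cases "j = 0")
    case True then show ?thesis unfolding R_def by simp
  next
    case False then show ?thesis using RLw[of j] that Lw_ne by simp
  qed
  have Rord: "lessset (R i) (R j)" if "i < j" "j \<le> k" for i j
  proof (cases "i = 0")
    case True
    have "\<forall>x\<in>R j. y0 < x" using Rgtb[of j] that True bX(2) by force
    then show ?thesis unfolding lessset_def R_def using True by simp
  next
    case False
    have "lessset (bs ! (i - 1)) (bs ! (j - 1))"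
      by (rule sorted_wrt_nth_less[OF bs(3)]) (use that False kb bs(1) in auto)
    then show ?thesis unfolding R_def using False that by simp
  qed
  have st1: "\<forall>j\<in>{1..k}. \<exists>D'. D' \<subseteq> R j \<and> Lw (Suc (4 * n)) D' \<and>
      (\<forall>q\<in>X \<inter> {..<Min (R j)}. \<forall>x\<in>D'. \<forall>y\<in>D'. P q x = P q y)"
  proof
    fix j assume j: "j \<in> {1..k}"
    have jj: "1 \<le> j" "j \<le> k" using j by auto
    have mR: "Min (R j) \<in> X" using RX[OF jj(2)] Rne[OF jj(2)] Min_in by blast
    have c: "4 ^ card (X \<inter> {..<Min (R j)}) \<le> Min (R j)" by (rule count_sparse[OF spX mR])
    show "\<exists>D'. D' \<subseteq> R j \<and> Lw (Suc (4 * n)) D' \<and>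
      (\<forall>q\<in>X \<inter> {..<Min (R j)}. \<forall>x\<in>D'. \<forall>y\<in>D'. P q x = P q y)"
      using thin[where col=P, OF RLw[OF jj] sparse_sub[OF spX RX[OF jj(2)]] _ c] by blast
  qed
  obtain D1 where D1: "\<forall>j\<in>{1..k}. D1 j \<subseteq> R j \<and> Lw (Suc (4 * n)) (D1 j) \<and>
      (\<forall>q\<in>X \<inter> {..<Min (R j)}. \<forall>x\<in>D1 j. \<forall>y\<in>D1 j. P q x = P q y)"
    using bchoice[OF st1] by blast
  define rep where "rep j = Min (D1 j)" for j
  have D1ne: "finite (D1 j) \<and> D1 j \<noteq> {}" if "j \<in> {1..k}" for j
  proof -
    have "Lw (Suc (4 * n)) (D1 j)" using D1 that by blast
    then show ?thesis by (rule Lw_ne)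
  qed
  have repD1: "rep j \<in> D1 j" if "j \<in> {1..k}" for j
    using D1ne[OF that] Min_in unfolding rep_def by blast
  have st2: "\<forall>i\<in>{1..k}. \<exists>D'. D' \<subseteq> D1 i \<and> Lw (4 * n) D' \<and>
      (\<forall>j\<in>{i<..k}. \<forall>x\<in>D'. \<forall>y\<in>D'. P x (rep j) = P y (rep j))"
  proof
    fix i assume i: "i \<in> {1..k}"
    have ii: "1 \<le> i" "i \<le> k" using i by auto
    have D1i: "D1 i \<subseteq> R i" "Lw (Suc (4 * n)) (D1 i)" using D1 i by auto
    have mD: "Min (D1 i) \<in> D1 i" using D1ne[OF i] Min_in by blast
    have "b < Min (D1 i)" using Rgtb[OF ii] D1i(1) mD by blast
    moreover have "Min (D1 i) \<in> X" using mD D1i(1) RX[OF ii(2)] by blast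
    ultimately have c1: "4 ^ b < Min (D1 i)" using sparse_lt bX(1) by blast
    have "card {i<..k} \<le> b" using kb by simp
    then have c2: "(4::nat) ^ card {i<..k} \<le> 4 ^ b" by (rule power_increasing) simp
    have c: "4 ^ card {i<..k} \<le> Min (D1 i)" using c1 c2 by linarith
    have spD: "exp_sparse (D1 i)" using sparse_sub[OF spX] D1i(1) RX[OF ii(2)] by blast
    show "\<exists>D'. D' \<subseteq> D1 i \<and> Lw (4 * n) D' \<and>
      (\<forall>j\<in>{i<..k}. \<forall>x\<in>D'. \<forall>y\<in>D'. P x (rep j) = P y (rep j))"
      using thin[where col="\<lambda>j x. P x (rep j)", OF D1i(2) spD _ c] by simp
  qed
  obtain D2 where D2: "\<forall>i\<in>{1..k}. D2 i \<subseteq> D1 i \<and> Lw (4 * n) (D2 i) \<and>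
      (\<forall>j\<in>{i<..k}. \<forall>x\<in>D2 i. \<forall>y\<in>D2 i. P x (rep j) = P y (rep j))"
    using bchoice[OF st2] by blast
  define Z where "Z i = (if i = 0 then {y0} else D2 i)" for i
  have ZR: "Z i \<subseteq> R i" if "i \<le> k" for i
  proof (cases "i = 0")
    case True then show ?thesis unfolding Z_def R_def by simp
  next
    case False then show ?thesis using D1 D2 that unfolding Z_def by force
  qed
  have Zne: "finite (Z i) \<and> Z i \<noteq> {}" if "i \<le> k" for i
  proof (cases "i = 0")
    case True then show ?thesis unfolding Z_def by simp
  next
    case False
    then have "Lw (4 * n) (D2 i)" using D2 that by auto
    then show ?thesis using Lw_ne False unfolding Z_def by simp
  qed
  define c where "c i j = P (Min (Z i)) (rep j)" for i j
  have cross: "\<forall>x\<in>Z i. \<forall>z\<in>Z j. P x z = c i j" if ij: "i < j" "j \<le> k" for i j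
  proof (intro ballI)
    fix x z assume x: "x \<in> Z i" and z: "z \<in> Z j"
    have j1: "j \<in> {1..k}" using ij by auto
    have zD1: "z \<in> D1 j" using z D2 j1 unfolding Z_def by auto
    have xR: "x \<in> R i" using ZR[of i] ij x by auto
    have mRj: "Min (R j) \<in> R j" using Rne[OF ij(2)] Min_in by blast
    have xlt: "x < Min (R j)" using Rord[OF ij] xR mRj unfolding lessset_def by blast
    have xX: "x \<in> X" using RX[of i] ij xR by auto
    have "P x z = P x (rep j)" using D1 j1 xX xlt zD1 repD1[OF j1] by blast
    also have "\<dots> = P (Min (Z i)) (rep j)"
    proof (cases "i = 0")
      case True then show ?thesis using x unfolding Z_def by simp
    next
      case False
      then have i1: "i \<in> {1..k}" using ij by auto
      have mZ: "Min (Z i) \<in> Z i" using Zne[of i] ij Min_in by auto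
      have "j \<in> {i<..k}" using ij by simp
      moreover have "\<forall>j'\<in>{i<..k}. \<forall>x\<in>D2 i. \<forall>y\<in>D2 i. P x (rep j') = P y (rep j')" using D2 i1 by blast
      moreover have "x \<in> D2 i" "Min (Z i) \<in> D2 i" using x mZ False unfolding Z_def by auto
      ultimately show ?thesis by blast
    qed
    finally show "P x z = c i j" unfolding c_def .
  qed
  have cardJ: "card {0..k} = 2 ^ y0" unfolding k_def using pos2 by simp
  obtain I h where I: "I \<subseteq> {0..k}" "Min {0..k} \<in> I" "y0 + 1 \<le> card I"
      "\<forall>i\<in>I. \<forall>j\<in>I. i < j \<longrightarrow> c i j = h i"
    using greedy[of "{0..k}" y0 c] cardJ by auto
  have "Min {0..k} = (0::nat)" by (rule Min_eqI) auto
  then have I0: "0 \<in> I" using I(2) by simp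
  have finI: "finite I" using I(1) finite_subset by blast
  have st3: "\<forall>i\<in>I - {0}. \<exists>Y. Y \<subseteq> D2 i \<and> Lw n Y \<and> transitive_on P Y"
  proof
    fix i assume i: "i \<in> I - {0}"
    then have i1: "i \<in> {1..k}" using I(1) by auto
    have "D2 i \<subseteq> X" using D1 D2 i1 RX[of i] by force
    moreover have "Lw (4 * n) (D2 i)" using D2 i1 by blast
    ultimately show "\<exists>Y. Y \<subseteq> D2 i \<and> Lw n Y \<and> transitive_on P Y"
      using Suc.IH[OF finite_subset[OF _ fX(1)] sparse_sub[OF spX]] by blast
  qed
  obtain Yf where Yf: "\<forall>i\<in>I - {0}. Yf i \<subseteq> D2 i \<and> Lw n (Yf i) \<and> transitive_on P (Yf i)"
    using bchoice[OF st3] by blast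
  define W where "W i = (if i = 0 then {y0} else Yf i)" for i
  have WZ: "W i \<subseteq> Z i" if "i \<in> I" for i
    using Yf that unfolding W_def Z_def by auto
  have Ik: "i \<le> k" if "i \<in> I" for i using I(1) that by auto
  define Y where "Y = (\<Union>i\<in>I. W i)"
  have YX: "Y \<subseteq> X"
  proof
    fix y assume "y \<in> Y"
    then obtain i where "i \<in> I" "y \<in> W i" unfolding Y_def by blast
    then show "y \<in> X" using WZ ZR RX Ik by blast
  qed
  have trY: "transitive_on P Y" unfolding Y_def
  proof (rule blocks_trans[where h=h])
    show "\<forall>i\<in>I. transitive_on P (W i)"
      using Yf trans_single unfolding W_def by auto
    show "\<forall>i\<in>I. \<forall>j\<in>I. i < j \<longrightarrow> lessset (W i) (W j)"
    proof (intro ballI impI)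
      fix i j assume "i \<in> I" "j \<in> I" "i < j"
      then show "lessset (W i) (W j)"
        using Rord[of i j] Ik WZ[of i] WZ[of j] ZR[of i] ZR[of j] unfolding lessset_def by blast
    qed
    show "\<forall>i\<in>I. \<forall>j\<in>I. i < j \<longrightarrow> (\<forall>x\<in>W i. \<forall>z\<in>W j. P x z = h i)"
    proof (intro ballI impI)
      fix i j x z assume ij: "i \<in> I" "j \<in> I" "i < j" and xz: "x \<in> W i" "z \<in> W j"
      have "P x z = c i j" using cross[OF ij(3) Ik[OF ij(2)]] WZ[OF ij(1)] WZ[OF ij(2)] xz by blast
      then show "P x z = h i" using I(4) ij by simp
    qed
  qed
  have finY: "finite Y" unfolding Y_def using finI WZ Zne Ik finite_subset by (metis finite_UN_I)
  have y0Y: "y0 \<in> Y" unfolding Y_def W_def using I0 by force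
  have minY: "Min Y = y0" using finY y0Y YX y0le by (intro Min_eqI) auto
  define ws where "ws = map Yf (sorted_list_of_set (I - {0}))"
  have finI0: "finite (I - {0})" using finI by simp
  have lws: "length ws = card (I - {0})" unfolding ws_def using finI0 by simp
  have "card (I - {0}) = card I - 1" using I0 finI by simp
  then have lws2: "y0 \<le> length ws" using lws I(3) by simp
  have wsLw: "\<forall>C\<in>set ws. Lw n C" unfolding ws_def using Yf finI0 by auto
  have wsS: "sorted_wrt lessset ws"
    unfolding ws_def sorted_wrt_map
  proof (rule sorted_wrt_mono_rel[OF _ strict_sorted_list_of_set])
    fix i j assume ij: "i \<in> set (sorted_list_of_set (I - {0}))" "j \<in> set (sorted_list_of_set (I - {0}))" "i < j"
    then have ij': "i \<in> I" "j \<in> I" "i \<noteq> 0" "j \<noteq> 0" using finI0 by auto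
    have "lessset (W i) (W j)"
      using Rord[of i j] Ik ij' ij(3) WZ[of i] WZ[of j] ZR[of i] ZR[of j] unfolding lessset_def by blast
    then show "lessset (Yf i) (Yf j)" unfolding W_def using ij' by simp
  qed
  have wsU: "\<Union>(set ws) \<subseteq> Y - {y0}"
  proof
    fix y assume "y \<in> \<Union>(set ws)"
    then obtain i where i: "i \<in> I" "i \<noteq> 0" "y \<in> Yf i" unfolding ws_def using finI0 by auto
    have "y \<in> W i" using i unfolding W_def by simp
    then have yY: "y \<in> Y" unfolding Y_def using i by blast
    have "y \<in> R i" using WZ[OF i(1)] ZR[OF Ik[OF i(1)]] \<open>y \<in> W i\<close> by blast
    then have "y0 < y" using Rgtb[of i] i Ik bX(2) by force
    then show "y \<in> Y - {y0}" using yY by simp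
  qed
  have "L n (length ws) (Y - {y0})" unfolding L_def using wsLw wsS wsU by blast
  then have "L n y0 (Y - {y0})" using L_le lws2 by blast
  then have "Lw (Suc n) Y" unfolding Lw_Suc' minY using finY y0Y by blast
  then show ?case using YX trY by blast
qed



lemma trans_sub: "transitive_on P Y \<Longrightarrow> Z \<subseteq> Y \<Longrightarrow> transitive_on P Z"
  unfolding transitive_on_def by blast

theorem theorem2p10:
  fixes n :: nat and X :: "nat set"
  assumes "finite X"
    and "large (omega_pow (36 * n)) X"
    and "exp_sparse X"
  shows "EM_large (omega_pow n) X"
proof -
  define xs where "xs = sorted_list_of_set X"
  have xs: "sorted xs" "distinct xs" "set xs = X" unfolding xs_def using assms(1) by auto
  have "foldl fund [36 * n] xs = []" using assms(2) unfolding large_def omega_pow_def xs_def by simp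
  then have L36: "Lw (36 * n) X" using R1[OF xs(1,2)] xs(3) by simp
  have fX: "finite X" "X \<noteq> {}" using Lw_ne[OF L36] by blast+
  have "Min X \<in> X" using Min_in[OF fX] .
  then have m1: "1 \<le> Min X" using assms(3) unfolding exp_sparse_def by force
  have "Lw (4 * n + 32 * n) X" using L36 by (simp add: algebra_simps)
  then have L4: "Lw (4 * n) X" using Lw_down_add m1 by blast
  show ?thesis unfolding EM_large_def
  proof
    fix P :: "nat \<Rightarrow> nat \<Rightarrow> bool"
    obtain Y where Y: "Y \<subseteq> X" "Lw n Y" "transitive_on P Y"
      using main[OF assms(1) assms(3) L4] by blast
    obtain ys where ys: "sorted ys" "distinct ys" "set ys \<subseteq> Y" "foldl fund [n] ys = []"
      using R2[OF Y(2)] by blast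
    have "large (omega_pow n) (set ys)"
      unfolding large_def omega_pow_def
      using ys sorted_list_of_set.idem_if_sorted_distinct[OF ys(1,2)] by simp
    moreover have "set ys \<subseteq> X" using ys(3) Y(1) by blast
    moreover have "transitive_on P (set ys)" using trans_sub[OF Y(3) ys(3)] .
    ultimately show "\<exists>Y\<subseteq>X. large (omega_pow n) Y \<and> transitive_on P Y" by blast
  qed
qed


end
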